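(* Consider an implication of canonical form $(\ast)$ and an environment $\eta$. Let $L=\{(i,j)\mid1\le i\le M,1\le j\le N\}$. Suppose (S1) for all $(i,j)\in L$ with $\Pi(i)\not\ge\Omega(j)$ there is $c\in V$ with $\Pi(i)(c)<\Omega(j)(c)$ and such that $\Pi(k)(c)=\Omega(l)(c)$ for every $(k,l)\in L$ with $\Pi(k)\ge\Omega(l)$; and (S2) for every $1\le j\le N$ there is $c\in V$ with $\Omega(j)(c)>0$ and such that $\Pi(k)(c)=\Omega(l)(c)$ for every $(k,l)\in L$ with $\Pi(k)\ge\Omega(l)$. If the implication is unary $\eta$-valid, then the Parametricity Condition holds for it and $\eta$ (and hence, by the preceding proposition, it is binary $\eta$-valid).
   Context: $\mathsf{Heap}$: finite partial functions $\mathsf{PosInt}\to\mathsf{Int}$; $g\sqsubseteq h$ means $h$ extends $g$; $h\cdot g$ union of disjoint heaps; componentwise on $\mathsf{Heap}^n$. $\mathsf{IRel}_n$: upward closed subsets of $\mathsf{Heap}^n$; $p*q=\{\mathbf f\cdot\mathbf g\mid\mathbf f\in p,\mathbf g\in q,\text{componentwise disjoint}\}$; $\Delta_n(X)=\{(h_1,\dots,h_n)\mid\exists f\in X.\ \forall k.\ f\sqsubseteq h_k\}$. Assertions: built from primitive assertions $P$, assertion variables, $\mathsf{true},\mathsf{false},\wedge,\vee,*$, quantifiers over integer variables. $n$-ary meaning under $\eta$ and $\rho:\mathsf{AVar}\to\mathsf{IRel}_n$: $[\![P]\!]^n=\Delta_n([\![P]\!]^{\mathrm{prim}}_\eta)$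 (standard meaning $[\![P]\!]^{\mathrm{prim}}_\eta\subseteq\mathsf{Heap}$), $[\![a]\!]^n=\rho(a)$, connectives by $\mathsf{Heap}^n,\emptyset,\cap,\cup,*$, quantifiers by unions/intersections. $n$-ary $\eta$-validity of $\varphi\Rightarrow\psi$: $[\![\varphi]\!]^n_{\eta,\rho}\subseteq[\![\psi]\!]^n_{\eta,\rho}$ for all $\rho:\mathsf{AVar}\to\mathsf{IRel}_n$ (unary: $n=1$, binary: $n=2$). Canonical form $(\ast)$: $\bigwedge_{i=1}^M\varphi_i*a_{i,1}*\cdots*a_{i,M_i}\Rightarrow\bigvee_{j=1}^N\psi_j*b_{j,1}*\cdots*b_{j,N_j}$, $M\ge1$, $N\ge0$, $\varphi_i,\psi_j$ free of assertion variables, every $b_{j,k}$ among the $a_{i,k}$. $V=\{a_{i,k}\}$; $\Pi(i)(c)=|\{k\mid a_{i,k}=c\}|$, $\Omega(j)(c)=|\{k\mid b_{j,k}=c\}|$; $\Pi(i)\ge\Omega(j)$ iff $\Pi(i)(c)\ge\Omega(j)(c)$ for all $c\in V$, and $\Pi(i)\not\ge\Omega(j)$ otherwise. Disjunct $j$ is empty if $N_j=0$. Parametricity Condition: for all $h,h_1,\dots,h_M\in\mathsf{Heap}$ with $h_i\sqsubseteq h$ and $h_i\in[\![\varphi_i]\!]^1_\eta$ for all $i$, either (1) there are $i,j$ with $h_i\in[\![\psi_j]\!]^1_\eta$ and $\Pi(i)\ge\Omega(j)$, or (2) there is an empty disjunct $j$ with $h\in[\![\psi_j]\!]^1_\eta$.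 *)

theory Defs
  imports Main
begin

text \<open>A heap is a finite partial function from positive integers to integers.
  Addresses are represented by natural numbers, with address 0 excluded.\<close>

type_synonym heap = "nat \<rightharpoonup> int"

definition is_heap :: "heap \<Rightarrow> bool" where
  "is_heap h \<longleftrightarrow> finite (dom h) \<and> 0 \<notin> dom h"

definition Heaps :: "nat \<Rightarrow> heap list set" where
  "Heaps n = {hs. length hs = n \<and> (\<forall>h\<in>set hs. is_heap h)}"

definition heaps_le :: "heap list \<Rightarrow> heap list \<Rightarrow> bool" where
  "heaps_le gs hs \<longleftrightarrow> list_all2 (\<lambda>g h. g \<subseteq>\<^sub>m h) gs hs"

definition IRel :: "nat \<Rightarrow> heap list set set" where
  "IRel n = {R. R \<subseteq> Heaps n \<and> (\<forall>gs\<in>R. \<forall>hs\<in>Heaps n. heaps_le gs hs \<longrightarrow> hs \<in> R)}"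

definition sep :: "heap list set \<Rightarrow> heap list set \<Rightarrow> heap list set" where
  "sep p q = {map2 (++) fs gs | fs gs. fs \<in> p \<and> gs \<in> q \<and>
                 list_all2 (\<lambda>f g. dom f \<inter> dom g = {}) fs gs}"

definition Delta :: "nat \<Rightarrow> heap set \<Rightarrow> heap list set" where
  "Delta n X = {hs \<in> Heaps n. \<exists>f\<in>X. \<forall>h\<in>set hs. f \<subseteq>\<^sub>m h}"

datatype ('p, 'a, 'v) assn =
    Prim 'p
  | AVar 'a
  | ATrue
  | AFalse
  | AConj "('p, 'a, 'v) assn" "('p, 'a, 'v) assn"
  | ADisj "('p, 'a, 'v) assn" "('p, 'a, 'v) assn"
  | AStar "('p, 'a, 'v) assn" "('p, 'a, 'v) assn"
  | AEx 'v "('p, 'a, 'v) assn"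
  | AAll 'v "('p, 'a, 'v) assn"

fun avars :: "('p, 'a, 'v) assn \<Rightarrow> 'a set" where
  "avars (Prim P) = {}"
| "avars (AVar a) = {a}"
| "avars ATrue = {}"
| "avars AFalse = {}"
| "avars (AConj p q) = avars p \<union> avars q"
| "avars (ADisj p q) = avars p \<union> avars q"
| "avars (AStar p q) = avars p \<union> avars q"
| "avars (AEx x p) = avars p"
| "avars (AAll x p) = avars p"

text \<open>n-ary meaning. The parameter I gives the standard (unary) meaning
  of primitive assertions under an environment, as a set of heaps.\<close>
fun sem :: "(('v \<Rightarrow> int) \<Rightarrow> 'p \<Rightarrow> heap set) \<Rightarrow> nat \<Rightarrow> ('v \<Rightarrow> int)
            \<Rightarrow> ('a \<Rightarrow> heap list set) \<Rightarrow> ('p, 'a, 'v) assn \<Rightarrow> heap list set" where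
  "sem I n \<eta> \<rho> (Prim P) = Delta n (I \<eta> P)"
| "sem I n \<eta> \<rho> (AVar a) = \<rho> a"
| "sem I n \<eta> \<rho> ATrue = Heaps n"
| "sem I n \<eta> \<rho> AFalse = {}"
| "sem I n \<eta> \<rho> (AConj p q) = sem I n \<eta> \<rho> p \<inter> sem I n \<eta> \<rho> q"
| "sem I n \<eta> \<rho> (ADisj p q) = sem I n \<eta> \<rho> p \<union> sem I n \<eta> \<rho> q"
| "sem I n \<eta> \<rho> (AStar p q) = sep (sem I n \<eta> \<rho> p) (sem I n \<eta> \<rho> q)"
| "sem I n \<eta> \<rho> (AEx x p) = (\<Union>k. sem I n (\<eta>(x := k)) \<rho> p)"
| "sem I n \<eta> \<rho> (AAll x p) = (\<Inter>k. sem I n (\<eta>(x := k)) \<rho> p)"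

definition valid :: "(('v \<Rightarrow> int) \<Rightarrow> 'p \<Rightarrow> heap set) \<Rightarrow> nat \<Rightarrow> ('v \<Rightarrow> int)
            \<Rightarrow> ('p, 'a, 'v) assn \<Rightarrow> ('p, 'a, 'v) assn \<Rightarrow> bool" where
  "valid I n \<eta> \<phi> \<psi> \<longleftrightarrow>
     (\<forall>\<rho>. (\<forall>a. \<rho> a \<in> IRel n) \<longrightarrow> sem I n \<eta> \<rho> \<phi> \<subseteq> sem I n \<eta> \<rho> \<psi>)"

text \<open>Unary meaning of an assertion free of assertion variables, as a set of heaps
  (the valuation of assertion variables is irrelevant; we use the empty one).\<close>
definition sem1 :: "(('v \<Rightarrow> int) \<Rightarrow> 'p \<Rightarrow> heap set) \<Rightarrow> ('v \<Rightarrow> int)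
            \<Rightarrow> ('p, 'a, 'v) assn \<Rightarrow> heap set" where
  "sem1 I \<eta> \<phi> = {h. [h] \<in> sem I 1 \<eta> (\<lambda>_. {}) \<phi>}"

definition star_vars :: "('p, 'a, 'v) assn \<Rightarrow> 'a list \<Rightarrow> ('p, 'a, 'v) assn" where
  "star_vars \<phi> as = foldl (\<lambda>acc a. AStar acc (AVar a)) \<phi> as"

fun big_conj :: "('p, 'a, 'v) assn list \<Rightarrow> ('p, 'a, 'v) assn" where
  "big_conj [] = ATrue"
| "big_conj [x] = x"
| "big_conj (x # xs) = AConj x (big_conj xs)"

fun big_disj :: "('p, 'a, 'v) assn list \<Rightarrow> ('p, 'a, 'v) assn" where
  "big_disj [] = AFalse"
| "big_disj [x] = x"
| "big_disj (x # xs) = ADisj x (big_disj xs)"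

text \<open>Left- and right-hand side of the canonical implication (indices are 0-based).\<close>
definition canon_lhs :: "('p, 'a, 'v) assn list \<Rightarrow> 'a list list \<Rightarrow> ('p, 'a, 'v) assn" where
  "canon_lhs phis as = big_conj (map2 star_vars phis as)"

definition canon_rhs :: "('p, 'a, 'v) assn list \<Rightarrow> 'a list list \<Rightarrow> ('p, 'a, 'v) assn" where
  "canon_rhs psis bs = big_disj (map2 star_vars psis bs)"

definition canonical_form ::
  "('p, 'a, 'v) assn list \<Rightarrow> 'a list list \<Rightarrow> ('p, 'a, 'v) assn list \<Rightarrow> 'a list list \<Rightarrow> bool" where
  "canonical_form phis as psis bs \<longleftrightarrow>
     length phis \<ge> 1 \<and> length as = length phis \<and> length bs = length psis \<and>
     (\<forall>\<phi>\<in>set phis. avars \<phi> = {}) \<and> (\<forall>\<psi>\<in>set psis. avars \<psi> = {}) \<and>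
     (\<forall>b\<in>set bs. set b \<subseteq> (\<Union>a\<in>set as. set a))"

definition Vset :: "'a list list \<Rightarrow> 'a set" where
  "Vset as = (\<Union>a\<in>set as. set a)"

definition Pi :: "'a list list \<Rightarrow> nat \<Rightarrow> 'a \<Rightarrow> nat" where
  "Pi as i c = count_list (as ! i) c"

definition Omega :: "'a list list \<Rightarrow> nat \<Rightarrow> 'a \<Rightarrow> nat" where
  "Omega bs j c = count_list (bs ! j) c"

definition PiOm_ge :: "'a list list \<Rightarrow> 'a list list \<Rightarrow> nat \<Rightarrow> nat \<Rightarrow> bool" where
  "PiOm_ge as bs i j \<longleftrightarrow> (\<forall>c\<in>Vset as. Pi as i c \<ge> Omega bs j c)"

definition parametricity_condition ::
  "(('v \<Rightarrow> int) \<Rightarrow> 'p \<Rightarrow> heap set) \<Rightarrow> ('v \<Rightarrow> int) \<Rightarrow>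
   ('p, 'a, 'v) assn list \<Rightarrow> 'a list list \<Rightarrow> ('p, 'a, 'v) assn list \<Rightarrow> 'a list list \<Rightarrow> bool" where
  "parametricity_condition I \<eta> phis as psis bs \<longleftrightarrow>
     (\<forall>h hs. is_heap h \<longrightarrow> length hs = length phis \<longrightarrow>
        (\<forall>i<length phis. hs ! i \<subseteq>\<^sub>m h \<and> hs ! i \<in> sem1 I \<eta> (phis ! i)) \<longrightarrow>
        (\<exists>i<length phis. \<exists>j<length psis. hs ! i \<in> sem1 I \<eta> (psis ! j) \<and> PiOm_ge as bs i j)
        \<or> (\<exists>j<length psis. bs ! j = [] \<and> h \<in> sem1 I \<eta> (psis ! j)))"

end

theory Submission imports Defs "HOL-Library.Countable" begin

lemma is_heap_add: "is_heap f \<Longrightarrow> is_heap g \<Longrightarrow> is_heap (f ++ g)"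
  by (auto simp: is_heap_def)

lemma is_heap_restrict: "is_heap f \<Longrightarrow> is_heap (f |` A)"
  by (auto simp: is_heap_def)

lemma sem_Heaps: "(\<forall>a. \<rho> a \<subseteq> Heaps n) \<Longrightarrow> sem I n \<eta> \<rho> p \<subseteq> Heaps n"
proof (induction p arbitrary: \<eta>)
  case (AStar p q)
  show ?case
  proof
    fix x assume "x \<in> sem I n \<eta> \<rho> (AStar p q)"
    then obtain fs gs where x: "x = map2 (++) fs gs" and fs: "fs \<in> sem I n \<eta> \<rho> p"
      and gs: "gs \<in> sem I n \<eta> \<rho> q" and d: "list_all2 (\<lambda>f g. dom f \<inter> dom g = {}) fs gs"
      by (auto simp: sep_def)
    have "fs \<in> Heaps n" "gs \<in> Heaps n" using AStar fs gs by auto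
    then show "x \<in> Heaps n" unfolding x Heaps_def
      by (auto simp: set_zip is_heap_add)
  qed
next
  case (AAll v p)
  show ?case
  proof
    fix x assume "x \<in> sem I n \<eta> \<rho> (AAll v p)"
    hence "x \<in> sem I n (\<eta>(v:=0)) \<rho> p" by simp
    thus "x \<in> Heaps n" using AAll.IH AAll.prems by blast
  qed
qed (auto simp: Delta_def)

lemma sep1:
  assumes "P \<subseteq> Heaps 1" "Q \<subseteq> Heaps 1"
  shows "[H] \<in> sep P Q \<longleftrightarrow> (\<exists>f g. [f] \<in> P \<and> [g] \<in> Q \<and> dom f \<inter> dom g = {} \<and> H = f ++ g)"
proof
  assume "[H] \<in> sep P Q"
  then obtain fs gs where fs: "fs \<in> P"
      and gs: "gs \<in> Q" and x: "[H] = map2 (++) fs gs" and d: "list_all2 (\<lambda>f g. dom f \<inter> dom g = {}) fs gs"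
      using that unfolding sep_def mem_Collect_eq by metis
  from fs gs assms have "length fs = 1" "length gs = 1" by (auto simp: Heaps_def)
  then obtain f g where "fs = [f]" "gs = [g]"
    by (metis One_nat_def length_0_conv length_Suc_conv)
  then show "\<exists>f g. [f] \<in> P \<and> [g] \<in> Q \<and> dom f \<inter> dom g = {} \<and> H = f ++ g"
    using x fs gs d by auto
next
  assume "\<exists>f g. [f] \<in> P \<and> [g] \<in> Q \<and> dom f \<inter> dom g = {} \<and> H = f ++ g"
  then obtain f g where "[f] \<in> P" "[g] \<in> Q" "dom f \<inter> dom g = {}" "H = f ++ g" by blast
  then show "[H] \<in> sep P Q" unfolding sep_def
    by (intro CollectI exI[of _ "[f]"] exI[of _ "[g]"]) auto
qed

lemma sem_indep: "avars p = {} \<Longrightarrow> sem I n \<eta> \<rho> p = sem I n \<eta> \<rho>' p"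
  by (induction p arbitrary: \<eta>) auto

lemma sem_up:
  assumes "\<forall>a. \<rho> a \<in> IRel 1"
  shows "[g] \<in> sem I 1 \<eta> \<rho> p \<Longrightarrow> g \<subseteq>\<^sub>m h \<Longrightarrow> is_heap h \<Longrightarrow> [h] \<in> sem I 1 \<eta> \<rho> p"
proof (induction p arbitrary: \<eta> g h)
  case (Prim x)
  then show ?case by (auto simp: Delta_def Heaps_def intro: map_le_trans)
next
  case (AVar x)
  then show ?case using assms by (auto simp: IRel_def Heaps_def heaps_le_def)
next
  case ATrue
  then show ?case by (auto simp: Heaps_def)
next
  case (AStar p q)
  have HH: "\<forall>a. \<rho> a \<subseteq> Heaps 1" using assms by (auto simp: IRel_def)
  have "[g] \<in> sep (sem I 1 \<eta> \<rho> p) (sem I 1 \<eta> \<rho> q)" using AStar.prems(1) by simp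
  then obtain f1 f2 where f: "[f1] \<in> sem I 1 \<eta> \<rho> p" "[f2] \<in> sem I 1 \<eta> \<rho> q"
     "dom f1 \<inter> dom f2 = {}" "g = f1 ++ f2"
    using sep1[OF sem_Heaps[OF HH] sem_Heaps[OF HH]] by blast
  define h1 where "h1 = h |` (- dom f2)"
  have f2h: "f2 \<subseteq>\<^sub>m h" using AStar.prems(2) f(4) by (metis map_le_map_add map_le_trans)
  have "f1 \<subseteq>\<^sub>m h1" using AStar.prems(2) f(3,4) unfolding h1_def map_le_def
    by (auto simp: restrict_map_def map_add_def split: option.splits)
  then have 1: "[h1] \<in> sem I 1 \<eta> \<rho> p" using AStar.IH(1)[OF f(1)] AStar.prems(3)
    by (simp add: h1_def is_heap_restrict)
  have eq: "h = h1 ++ f2" using f2h unfolding h1_def map_le_def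
    by (auto simp: fun_eq_iff restrict_map_def map_add_def split: option.splits)
  have "dom h1 \<inter> dom f2 = {}" by (auto simp: h1_def)
  then have "[h] \<in> sep (sem I 1 \<eta> \<rho> p) (sem I 1 \<eta> \<rho> q)" using 1 f(2) eq
    using sep1[OF sem_Heaps[OF HH] sem_Heaps[OF HH]] by blast
  then show ?case by simp
qed auto

definition decomp :: "heap \<Rightarrow> heap \<Rightarrow> heap list \<Rightarrow> bool" where
"decomp H g fs \<longleftrightarrow> g \<subseteq>\<^sub>m H \<and> (\<forall>f\<in>set fs. f \<subseteq>\<^sub>m H) \<and> dom H = dom g \<union> (\<Union>f\<in>set fs. dom f)
   \<and> (\<forall>f\<in>set fs. dom g \<inter> dom f = {})
   \<and> (\<forall>q<length fs. \<forall>q'<length fs. q \<noteq> q' \<longrightarrow> dom (fs!q) \<inter> dom (fs!q') = {})"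

lemma star_vars_snoc: "star_vars \<phi> (xs@[a]) = AStar (star_vars \<phi> xs) (AVar a)"
  by (simp add: star_vars_def)

lemma star_vars_Nil: "star_vars \<phi> [] = \<phi>"
  by (simp add: star_vars_def)

lemma le_add_disj: "dom F \<inter> dom f = {} \<Longrightarrow> F \<subseteq>\<^sub>m F ++ f"
  by (metis map_add_comm map_le_map_add)

lemma star_dest:
  assumes R: "\<forall>a. \<rho> a \<in> IRel 1"
  shows "[H] \<in> sem I 1 \<eta> \<rho> (star_vars \<phi> xs) \<Longrightarrow> \<exists>g fs. length fs = length xs \<and> [g] \<in> sem I 1 \<eta> \<rho> \<phi>
     \<and> (\<forall>q<length xs. [fs!q] \<in> \<rho> (xs!q)) \<and> decomp H g fs"
proof (induction xs arbitrary: H rule: rev_induct)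
  case Nil
  then show ?case by (intro exI[of _ H] exI[of _ "[]"]) (auto simp: star_vars_Nil decomp_def)
next
  case (snoc a xs)
  have HH: "\<forall>a. \<rho> a \<subseteq> Heaps 1" using R by (auto simp: IRel_def)
  have "[H] \<in> sep (sem I 1 \<eta> \<rho> (star_vars \<phi> xs)) (\<rho> a)" using snoc.prems by (simp add: star_vars_snoc)
  then obtain F f where F: "[F] \<in> sem I 1 \<eta> \<rho> (star_vars \<phi> xs)" "[f] \<in> \<rho> a"
     "dom F \<inter> dom f = {}" "H = F ++ f"
    using sep1[OF sem_Heaps[OF HH] HH[rule_format]] by blast
  obtain g fs where g: "length fs = length xs" "[g] \<in> sem I 1 \<eta> \<rho> \<phi>"
     "\<forall>q<length xs. [fs!q] \<in> \<rho> (xs!q)" "decomp F g fs" using snoc.IH[OF F(1)] by blast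
  have FH: "F \<subseteq>\<^sub>m H" using F(3,4) le_add_disj by simp
  have fH: "f \<subseteq>\<^sub>m H" using F(4) by (simp add: map_le_map_add)
  have dF: "dom g \<subseteq> dom F" "\<forall>x\<in>set fs. dom x \<subseteq> dom F" using g(4) by (auto simp: decomp_def)
  have "decomp H g (fs @ [f])"
    unfolding decomp_def
  proof (intro conjI)
    show "g \<subseteq>\<^sub>m H" using g(4) FH by (auto simp: decomp_def intro: map_le_trans)
    show "\<forall>x\<in>set (fs @ [f]). x \<subseteq>\<^sub>m H" using g(4) FH fH by (auto simp: decomp_def intro: map_le_trans)
    show "dom H = dom g \<union> (\<Union>x\<in>set (fs @ [f]). dom x)" using g(4) F(4) by (auto simp: decomp_def)
    show "\<forall>x\<in>set (fs @ [f]). dom g \<inter> dom x = {}" using g(4) F(3) dF by (auto simp: decomp_def)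
    show "\<forall>q<length (fs @ [f]). \<forall>q'<length (fs @ [f]). q \<noteq> q' \<longrightarrow> dom ((fs @ [f]) ! q) \<inter> dom ((fs @ [f]) ! q') = {}"
    proof (intro allI impI)
      fix q q' assume q: "q < length (fs @ [f])" "q' < length (fs @ [f])" "q \<noteq> q'"
      have A: "\<And>r. r < length fs \<Longrightarrow> dom (fs!r) \<inter> dom f = {}" using dF F(3) by (meson disjoint_iff nth_mem subsetD)
      show "dom ((fs @ [f]) ! q) \<inter> dom ((fs @ [f]) ! q') = {}"
        using q A[of q] A[of q'] g(4) unfolding decomp_def
        by (cases "q < length fs"; cases "q' < length fs") (auto simp: nth_append)
    qed
  qed
  then show ?case using g F(2) by (intro exI[of _ g] exI[of _ "fs@[f]"]) (auto simp: nth_append)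
qed

lemma star_intro:
  assumes R: "\<forall>a. \<rho> a \<in> IRel 1"
  shows "length fs = length xs \<Longrightarrow> [g] \<in> sem I 1 \<eta> \<rho> \<phi> \<Longrightarrow>
     (\<forall>q<length xs. [fs!q] \<in> \<rho> (xs!q)) \<Longrightarrow> decomp H g fs \<Longrightarrow> [H] \<in> sem I 1 \<eta> \<rho> (star_vars \<phi> xs)"
proof (induction xs arbitrary: H fs rule: rev_induct)
  case Nil
  then have "H = g" by (auto simp: decomp_def map_le_def fun_eq_iff) (metis domD domIff)
  then show ?case using Nil by (simp add: star_vars_Nil)
next
  case (snoc a xs)
  have HH: "\<forall>a. \<rho> a \<subseteq> Heaps 1" using R by (auto simp: IRel_def)
  obtain fs' f where fs: "fs = fs' @ [f]" using snoc.prems(1)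
    by (metis length_append_singleton rev_exhaust length_0_conv nat.distinct(1))
  define F where "F = H |` (- dom f)"
  have d: "decomp H g fs" by fact
  have fH: "f \<subseteq>\<^sub>m H" using d fs by (auto simp: decomp_def)
  have dj: "\<forall>q<length fs'. dom (fs'!q) \<inter> dom f = {}"
  proof (intro allI impI)
    fix q assume "q < length fs'"
    then show "dom (fs'!q) \<inter> dom f = {}" using d fs unfolding decomp_def
      apply (elim conjE)
      apply (drule spec[of _ q], drule mp, simp)
      apply (drule spec[of _ "length fs'"])
      by (auto simp: nth_append)
  qed
  have djs: "\<forall>x\<in>set fs'. dom x \<inter> dom f = {}" using dj by (metis in_set_conv_nth)
  have "decomp F g fs'" unfolding decomp_def
  proof (intro conjI)
    show "g \<subseteq>\<^sub>m F" using d fs unfolding decomp_def F_def map_le_def by (auto simp: restrict_map_def)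
    show "\<forall>x\<in>set fs'. x \<subseteq>\<^sub>m F" using d fs djs unfolding decomp_def F_def map_le_def by (auto simp: restrict_map_def)
    show "dom F = dom g \<union> (\<Union>x\<in>set fs'. dom x)" using d fs djs unfolding decomp_def F_def by auto
    show "\<forall>x\<in>set fs'. dom g \<inter> dom x = {}" using d fs unfolding decomp_def by auto
    show "\<forall>q<length fs'. \<forall>q'<length fs'. q \<noteq> q' \<longrightarrow> dom (fs' ! q) \<inter> dom (fs' ! q') = {}"
    proof (intro allI impI)
      fix q q' assume "q < length fs'" "q' < length fs'" "q \<noteq> q'"
      then show "dom (fs' ! q) \<inter> dom (fs' ! q') = {}" using d fs unfolding decomp_def
        apply (elim conjE)
        apply (drule spec[of _ q], drule mp, simp, drule spec[of _ q'], drule mp, simp)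
        by (auto simp: nth_append)
    qed
  qed
  moreover have "\<forall>q<length xs. [fs'!q] \<in> \<rho> (xs!q)"
  proof (intro allI impI)
    fix q assume "q < length xs"
    moreover have "q < length (xs@[a])" using \<open>q < length xs\<close> by simp
    ultimately have "[fs!q] \<in> \<rho> ((xs@[a])!q)" using snoc.prems(3) by blast
    moreover have "q < length fs'" using \<open>q < length xs\<close> snoc.prems(1) fs by simp
    ultimately show "[fs'!q] \<in> \<rho> (xs!q)" using fs \<open>q < length xs\<close> by (simp add: nth_append)
  qed
  ultimately have 1: "[F] \<in> sem I 1 \<eta> \<rho> (star_vars \<phi> xs)"
    using snoc.IH[of fs' F] snoc.prems(1,2) fs by simp
  have lfs: "length fs' = length xs" using snoc.prems(1) fs by simp
  have "[fs ! length xs] \<in> \<rho> ((xs@[a]) ! length xs)" using snoc.prems(3) by (metis length_append_singleton lessI)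
  then have 2: "[f] \<in> \<rho> a" using fs lfs by (simp add: nth_append)
  have eq: "H = F ++ f" using fH unfolding F_def map_le_def
    by (auto simp: fun_eq_iff restrict_map_def map_add_def split: option.splits)
  have "[H] \<in> sep (sem I 1 \<eta> \<rho> (star_vars \<phi> xs)) (\<rho> a)"
  proof -
    have "dom F \<inter> dom f = {}" by (auto simp: F_def)
    then show ?thesis using sep1[OF sem_Heaps[OF HH] HH[rule_format]] 1 2 eq by blast
  qed
  then show ?case by (simp add: star_vars_snoc)
qed

lemma big_conj_intro: "xs \<noteq> [] \<Longrightarrow> (\<forall>x\<in>set xs. [H] \<in> sem I 1 \<eta> \<rho> x) \<Longrightarrow> [H] \<in> sem I 1 \<eta> \<rho> (big_conj xs)"
  by (induction xs rule: big_conj.induct) auto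

lemma big_disj_dest: "[H] \<in> sem I 1 \<eta> \<rho> (big_disj xs) \<Longrightarrow> \<exists>x\<in>set xs. [H] \<in> sem I 1 \<eta> \<rho> x"
  by (induction xs rule: big_disj.induct) auto

lemma count_card: "count_list xs c = card {i. i < length xs \<and> xs!i = c}"
  by (simp add: count_list_eq_length_filter length_filter_conv_card eq_commute)

lemma IRel_empty: "\<forall>a. (\<lambda>_. {}) a \<in> IRel 1"
  by (simp add: IRel_def)

lemma sem1_up: "avars p = {} \<Longrightarrow> \<forall>a. \<rho> a \<in> IRel 1 \<Longrightarrow> [g] \<in> sem I 1 \<eta> \<rho> p \<Longrightarrow> g \<subseteq>\<^sub>m h \<Longrightarrow> is_heap h
   \<Longrightarrow> h \<in> sem1 I \<eta> p"
proof -
  assume a: "avars p = {}" "\<forall>a. \<rho> a \<in> IRel 1" "[g] \<in> sem I 1 \<eta> \<rho> p" "g \<subseteq>\<^sub>m h" "is_heap h"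
  have "[g] \<in> sem I 1 \<eta> (\<lambda>_. {}) p" using a sem_indep by blast
  then have "[h] \<in> sem I 1 \<eta> (\<lambda>_. {}) p" using sem_up[of "\<lambda>_. {}", OF IRel_empty] a by blast
  then show ?thesis by (simp add: sem1_def)
qed

lemma sem1_down: "avars p = {} \<Longrightarrow> \<forall>a. \<rho> a \<in> IRel 1 \<Longrightarrow> g \<in> sem1 I \<eta> p \<Longrightarrow> g \<subseteq>\<^sub>m h \<Longrightarrow> is_heap h
   \<Longrightarrow> [h] \<in> sem I 1 \<eta> \<rho> p"
proof -
  assume a: "avars p = {}" "\<forall>a. \<rho> a \<in> IRel 1" "g \<in> sem1 I \<eta> p" "g \<subseteq>\<^sub>m h" "is_heap h"
  have "[g] \<in> sem I 1 \<eta> \<rho> p" using a sem_indep by (simp add: sem1_def) blast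
  then show "[h] \<in> sem I 1 \<eta> \<rho> p" using sem_up[of \<rho>] a by blast
qed

lemma sem1_heap: "g \<in> sem1 I \<eta> p \<Longrightarrow> is_heap g"
  using sem_Heaps[of "\<lambda>_. {}" 1 I \<eta> p] by (auto simp: sem1_def Heaps_def)

theorem mainTheorem5:
  fixes I :: "('v \<Rightarrow> int) \<Rightarrow> 'p \<Rightarrow> heap set"
    and \<eta> :: "'v \<Rightarrow> int"
    and phis psis :: "('p, 'a, 'v) assn list"
    and as bs :: "'a list list"
  assumes canon: "canonical_form phis as psis bs"
    and S1: "\<forall>i<length phis. \<forall>j<length psis. \<not> PiOm_ge as bs i j \<longrightarrow>
              (\<exists>c\<in>Vset as. Pi as i c < Omega bs j c \<and>
                 (\<forall>k<length phis. \<forall>l<length psis. PiOm_ge as bs k l \<longrightarrow> Pi as k c = Omega bs l c))"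
    and S2: "\<forall>j<length psis. \<exists>c\<in>Vset as. Omega bs j c > 0 \<and>
                 (\<forall>k<length phis. \<forall>l<length psis. PiOm_ge as bs k l \<longrightarrow> Pi as k c = Omega bs l c)"
    and unary_valid: "valid I 1 \<eta> (canon_lhs phis as) (canon_rhs psis bs)"
  shows "parametricity_condition I \<eta> phis as psis bs"
  unfolding parametricity_condition_def
proof (intro allI impI disjI1)
  fix h hs
  assume h: "is_heap h" and len: "length hs = length phis"
    and hyp: "\<forall>i<length phis. hs ! i \<subseteq>\<^sub>m h \<and> hs ! i \<in> sem1 I \<eta> (phis ! i)"
  define M where "M = length phis"
  define N where "N = length psis"
  have lenas: "length as = M" and lenbs: "length bs = N" and M1: "M \<ge> 1"
    and avphi: "\<forall>i<M. avars (phis!i) = {}" and avpsi: "\<forall>j<N. avars (psis!j) = {}"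
    using canon by (auto simp: canonical_form_def M_def N_def)
  define C where "C = {c \<in> Vset as. \<forall>k<M. \<forall>l<N. PiOm_ge as bs k l \<longrightarrow> Pi as k c = Omega bs l c}"
  define Pos where "Pos i = {p. p < length (as!i) \<and> as!i!p \<in> C}" for i
  define Md where "Md = {i. i < M \<and> Pos i \<noteq> {}}"
  define p0 where "p0 i = Min (Pos i)" for i
  define S where "S = {\<sigma>::nat list. length \<sigma> = M \<and> (\<forall>i<M. (i\<in>Md \<longrightarrow> \<sigma>!i \<in> Pos i) \<and> (i\<notin>Md \<longrightarrow> \<sigma>!i = 0))}"
  define m where "m = Max (insert 0 (dom h))"
  define addr where "addr \<sigma> = Suc (m + to_nat (\<sigma>::nat list))" for \<sigma>
  define Fr :: heap where "Fr = (\<lambda>x. if x \<in> addr ` S then Some 0 else None)"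
  define H where "H = h ++ Fr"
  define D where "D i p = addr ` {\<sigma>\<in>S. \<sigma>!i = p} \<union> (if p = p0 i then dom h - dom (hs!i) else {})" for i p
  define \<rho> where "\<rho> c = (if c \<in> C then {[f] | f. is_heap f \<and> (\<exists>i\<in>Md. \<exists>p\<in>Pos i. as!i!p = c \<and> H |` D i p \<subseteq>\<^sub>m f)} else Heaps 1)" for c

  have finPos: "finite (Pos i)" for i by (simp add: Pos_def)
  have p0: "i \<in> Md \<Longrightarrow> p0 i \<in> Pos i" for i using finPos by (simp add: Md_def p0_def)
  have finS: "finite S"
  proof -
    define B where "B = Suc (Max (length ` set as))"
    have "S \<subseteq> {\<sigma>. set \<sigma> \<subseteq> {..<B} \<and> length \<sigma> = M}"
    proof
      fix \<sigma> assume s: "\<sigma> \<in> S"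
      have "x < B" if "x \<in> set \<sigma>" for x
      proof -
        obtain i where i: "i < M" "x = \<sigma>!i" using \<open>x \<in> set \<sigma>\<close> s by (auto simp: S_def in_set_conv_nth)
        show ?thesis
        proof (cases "i \<in> Md")
          case True
          then have "x < length (as!i)" using s i by (auto simp: S_def Pos_def)
          moreover have "length (as!i) \<le> Max (length ` set as)"
            using i lenas by (intro Max_ge) auto
          ultimately show ?thesis by (simp add: B_def)
        next
          case False
          then show ?thesis using s i by (auto simp: S_def B_def)
        qed
      qed
      then show "\<sigma> \<in> {\<sigma>. set \<sigma> \<subseteq> {..<B} \<and> length \<sigma> = M}" using s by (auto simp: S_def)
    qed
    then show ?thesis by (rule finite_subset) (simp add: finite_lists_length_eq)
  qed
  have addr_inj: "inj addr" by (auto simp: inj_on_def addr_def)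
  have addr_h: "addr \<sigma> \<notin> dom h" for \<sigma>
  proof
    assume "addr \<sigma> \<in> dom h"
    then have "addr \<sigma> \<le> m" unfolding m_def using h by (intro Max_ge) (auto simp: is_heap_def)
    then show False by (simp add: addr_def)
  qed
  have addr0: "addr \<sigma> \<noteq> 0" for \<sigma> by (simp add: addr_def)
  have domFr: "dom Fr = addr ` S" by (auto simp: Fr_def dom_def)
  have domH: "dom H = dom h \<union> addr ` S" by (simp add: H_def domFr Un_commute)
  have hH: "h \<subseteq>\<^sub>m H" unfolding H_def using addr_h domFr by (intro le_add_disj) auto
  have heapH: "is_heap H" using h finS by (auto simp: is_heap_def domH addr_def)
  have hi1: "hs!i \<subseteq>\<^sub>m h" "hs!i \<in> sem1 I \<eta> (phis!i)" if "i < M" for i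
    using hyp that by (auto simp: M_def)
  have hi: "hs!i \<subseteq>\<^sub>m h" "hs!i \<subseteq>\<^sub>m H" "dom (hs!i) \<subseteq> dom h" "hs!i \<in> sem1 I \<eta> (phis!i)" "is_heap (hs!i)"
    if "i < M" for i
    using hi1[OF that] map_le_trans[OF hi1(1)[OF that] hH] map_le_implies_dom_le[OF hi1(1)[OF that]]
      sem1_heap[OF hi1(2)[OF that]] by auto
  have Dsub: "D i p \<subseteq> dom H" for i p by (auto simp: D_def domH)
  have Dhi: "D i p \<inter> dom (hs!i) = {}" if "i < M" for i p
    using hi[OF that] addr_h by (auto simp: D_def)
  have Ddisj: "D i p \<inter> D i p' = {}" if "p \<noteq> p'" for i p p'
    using that addr_h addr_inj by (auto simp: D_def inj_eq)
  have cover: "\<exists>p\<in>Pos i. x \<in> D i p" if cv: "i \<in> Md" "x \<in> dom H" "x \<notin> dom (hs!i)" for i x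
  proof (cases "x \<in> dom h")
    case True
    then show ?thesis using p0[OF cv(1)] cv by (auto simp: D_def)
  next
    case False
    then obtain \<sigma> where "\<sigma> \<in> S" "x = addr \<sigma>" using cv domH by auto
    moreover then have "\<sigma>!i \<in> Pos i" using cv(1) by (auto simp: S_def Md_def)
    ultimately show ?thesis by (auto simp: D_def)
  qed
  have sig: "\<exists>\<sigma>\<in>S. \<sigma>!i1 = p1 \<and> \<sigma>!i2 = p2"
    if "i1 \<in> Md" "i2 \<in> Md" "p1 \<in> Pos i1" "p2 \<in> Pos i2" "i1 = i2 \<Longrightarrow> p1 = p2" for i1 i2 p1 p2
  proof -
    define \<sigma> where "\<sigma> = map (\<lambda>k. if k = i1 then p1 else if k = i2 then p2 else if k \<in> Md then p0 k else 0) [0..<M]"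
    have "\<sigma> \<in> S" using that p0 unfolding S_def \<sigma>_def by auto
    moreover have "\<sigma>!i1 = p1 \<and> \<sigma>!i2 = p2" using that unfolding \<sigma>_def Md_def by auto
    ultimately show ?thesis by blast
  qed
  have rhoI: "\<forall>a. \<rho> a \<in> IRel 1"
  proof
    fix c show "\<rho> c \<in> IRel 1"
    proof (cases "c \<in> C")
      case True
      show ?thesis unfolding IRel_def
      proof (intro CollectI conjI ballI impI)
        show "\<rho> c \<subseteq> Heaps 1" using True by (auto simp: \<rho>_def Heaps_def)
        fix gs hs' assume gs: "gs \<in> \<rho> c" and hs': "hs' \<in> Heaps 1" and le: "heaps_le gs hs'"
        from gs True obtain f i p where f: "gs = [f]" "i\<in>Md" "p\<in>Pos i" "as!i!p = c" "H |` D i p \<subseteq>\<^sub>m f"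
          by (auto simp: \<rho>_def)
        from hs' obtain f' where f': "hs' = [f']" "is_heap f'"
          by (auto simp: Heaps_def length_Suc_conv)
        have "f \<subseteq>\<^sub>m f'" using le f f' by (simp add: heaps_le_def)
        then have "H |` D i p \<subseteq>\<^sub>m f'" using f(5) map_le_trans by blast
        then show "hs' \<in> \<rho> c" using f f' True unfolding \<rho>_def by auto
      qed
    next
      case False
      then show ?thesis by (auto simp: \<rho>_def IRel_def)
    qed
  qed

  have lhs_i: "[H] \<in> sem I 1 \<eta> \<rho> (star_vars (phis!i) (as!i))" if iM: "i < M" for i
  proof -
    define U where "U = (\<Union>p\<in>Pos i. D i p)"
    define g where "g = H |` (- U)"
    define fs where "fs = map (\<lambda>p. if p \<in> Pos i then H |` D i p else Map.empty) [0..<length (as!i)]"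
    have fsq: "fs!q = (if q \<in> Pos i then H |` D i q else Map.empty)" if "q < length (as!i)" for q
      using that by (simp add: fs_def)
    have lfs: "length fs = length (as!i)" by (simp add: fs_def)
    have "hs!i \<subseteq>\<^sub>m g"
    proof (unfold map_le_def, intro ballI)
      fix x assume x: "x \<in> dom (hs!i)"
      then have "x \<notin> U" using Dhi[OF iM] by (auto simp: U_def)
      then show "(hs!i) x = g x" using hi(2)[OF iM] x by (auto simp: g_def map_le_def)
    qed
    then have G: "[g] \<in> sem I 1 \<eta> \<rho> (phis!i)"
      using sem1_down[OF avphi[rule_format, OF iM] rhoI hi(4)[OF iM]] heapH
      by (simp add: g_def is_heap_restrict)
    have P: "[fs!q] \<in> \<rho> (as!i!q)" if q: "q < length (as!i)" for q
    proof (cases "q \<in> Pos i")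
      case True
      then have "as!i!q \<in> C" "i \<in> Md" using iM by (auto simp: Pos_def Md_def)
      moreover have w: "\<exists>i'\<in>Md. \<exists>p\<in>Pos i'. as!i'!p = as!i!q \<and> H |` D i' p \<subseteq>\<^sub>m H |` D i q"
        using \<open>i \<in> Md\<close> True map_le_refl by blast
      ultimately show ?thesis using fsq[OF q] True heapH unfolding \<rho>_def by (simp add: is_heap_restrict)
    next
      case False
      then have "as!i!q \<notin> C" using q by (auto simp: Pos_def)
      then show ?thesis using False fsq[OF q] unfolding \<rho>_def by (simp add: Heaps_def is_heap_def)
    qed
    have setfs: "set fs \<subseteq> insert Map.empty ((\<lambda>p. H |` D i p) ` Pos i)" by (auto simp: fs_def)
    have "(\<Union>f\<in>set fs. dom f) = U"
    proof
      show "(\<Union>f\<in>set fs. dom f) \<subseteq> U"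
      proof
        fix x assume "x \<in> (\<Union>f\<in>set fs. dom f)"
        then obtain f where "f \<in> set fs" "x \<in> dom f" by blast
        with setfs obtain p where "p \<in> Pos i" "f = H |` D i p" by auto
        then show "x \<in> U" using \<open>x \<in> dom f\<close> by (auto simp: U_def)
      qed
      show "U \<subseteq> (\<Union>f\<in>set fs. dom f)"
      proof
        fix x assume "x \<in> U"
        then obtain p where p: "p \<in> Pos i" "x \<in> D i p" by (auto simp: U_def)
        then have pl: "p < length fs" using lfs by (simp add: Pos_def)
        then have "fs!p \<in> set fs" by simp
        moreover have "x \<in> dom (fs!p)" using fsq[of p] Dsub p pl lfs by auto
        ultimately show "x \<in> (\<Union>f\<in>set fs. dom f)" by blast
      qed
    qed
    moreover have "U \<subseteq> dom H" using Dsub by (auto simp: U_def)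
    ultimately have D1: "dom H = dom g \<union> (\<Union>f\<in>set fs. dom f)" by (auto simp: g_def)
    have "decomp H g fs" unfolding decomp_def
    proof (intro conjI)
      show "g \<subseteq>\<^sub>m H" by (auto simp: g_def map_le_def)
      show "\<forall>f\<in>set fs. f \<subseteq>\<^sub>m H"
      proof
        fix f assume "f \<in> set fs"
        with setfs have "f = Map.empty \<or> (\<exists>p. f = H |` D i p)" by blast
        then show "f \<subseteq>\<^sub>m H" by (auto simp: map_le_def restrict_map_def split: if_splits)
      qed
      show "dom H = dom g \<union> (\<Union>f\<in>set fs. dom f)" by (rule D1)
      show "\<forall>f\<in>set fs. dom g \<inter> dom f = {}"
      proof
        fix f assume "f \<in> set fs"
        with setfs have "f = Map.empty \<or> (\<exists>p\<in>Pos i. f = H |` D i p)" by blast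
        then show "dom g \<inter> dom f = {}" by (auto simp: g_def U_def)
      qed
      show "\<forall>q<length fs. \<forall>q'<length fs. q \<noteq> q' \<longrightarrow> dom (fs ! q) \<inter> dom (fs ! q') = {}"
      proof (intro allI impI)
        fix q q' assume "q < length fs" "q' < length fs" "q \<noteq> q'"
        then show "dom (fs ! q) \<inter> dom (fs ! q') = {}"
          using fsq[of q] fsq[of q'] lfs Ddisj[of q q' i] by auto
      qed
    qed
    then show ?thesis using star_intro[OF rhoI lfs G] P by blast
  qed
  have LHS: "[H] \<in> sem I 1 \<eta> \<rho> (canon_lhs phis as)"
    unfolding canon_lhs_def
  proof (rule big_conj_intro)
    show "map2 star_vars phis as \<noteq> []" using M1 lenas by (auto simp: M_def)
    show "\<forall>x\<in>set (map2 star_vars phis as). [H] \<in> sem I 1 \<eta> \<rho> x"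
      using lhs_i lenas by (auto simp: set_zip M_def)
  qed
  then have "[H] \<in> sem I 1 \<eta> \<rho> (canon_rhs psis bs)" using unary_valid rhoI by (auto simp: valid_def)
  then obtain j where j: "j < N" "[H] \<in> sem I 1 \<eta> \<rho> (star_vars (psis!j) (bs!j))"
    using big_disj_dest lenbs unfolding canon_rhs_def by (fastforce simp: set_zip N_def)
  then obtain g fs where g: "length fs = length (bs!j)" "[g] \<in> sem I 1 \<eta> \<rho> (psis!j)"
     "\<forall>q<length (bs!j). [fs!q] \<in> \<rho> (bs!j!q)" "decomp H g fs"
    using star_dest[OF rhoI] by blast
  define bj where "bj = bs!j"
  define Q where "Q = {q. q < length bj \<and> bj!q \<in> C}"
  have ex: "\<forall>q\<in>Q. \<exists>ip. fst ip \<in> Md \<and> snd ip \<in> Pos (fst ip) \<and> as!fst ip!snd ip = bj!q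
               \<and> H |` D (fst ip) (snd ip) \<subseteq>\<^sub>m fs!q"
  proof
    fix q assume "q \<in> Q"
    then have "[fs!q] \<in> \<rho> (bj!q)" "bj!q \<in> C" using g(3) by (auto simp: Q_def bj_def)
    then obtain i p where "i\<in>Md" "p\<in>Pos i" "as!i!p = bj!q" "H |` D i p \<subseteq>\<^sub>m fs!q"
      by (auto simp: \<rho>_def)
    then show "\<exists>ip. fst ip \<in> Md \<and> snd ip \<in> Pos (fst ip) \<and> as!fst ip!snd ip = bj!q
               \<and> H |` D (fst ip) (snd ip) \<subseteq>\<^sub>m fs!q" by (intro exI[of _ "(i,p)"]) auto
  qed
  obtain blk where blk: "\<forall>q\<in>Q. fst (blk q) \<in> Md \<and> snd (blk q) \<in> Pos (fst (blk q)) \<and> as!fst (blk q)!snd (blk q) = bj!q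
               \<and> H |` D (fst (blk q)) (snd (blk q)) \<subseteq>\<^sub>m fs!q"
    using bchoice[OF ex] by blast
  have Dfs: "D (fst (blk q)) (snd (blk q)) \<subseteq> dom (fs!q)" if "q \<in> Q" for q
  proof -
    have "dom (H |` D (fst (blk q)) (snd (blk q))) \<subseteq> dom (fs!q)"
      using blk that map_le_implies_dom_le by blast
    moreover have "dom (H |` D (fst (blk q)) (snd (blk q))) = D (fst (blk q)) (snd (blk q))"
      using Dsub[of "fst (blk q)" "snd (blk q)"] by (simp add: dom_restrict inf.absorb2)
    ultimately show ?thesis by simp
  qed
  have fsdisj: "dom (fs!q) \<inter> dom (fs!q') = {}" if "q \<in> Q" "q' \<in> Q" "q \<noteq> q'" for q q'
    using g(1,4) that unfolding decomp_def Q_def bj_def by auto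
  have same: "fst (blk q) = fst (blk q') \<and> snd (blk q) \<noteq> snd (blk q')" if qq: "q \<in> Q" "q' \<in> Q" "q \<noteq> q'" for q q'
  proof (rule ccontr)
    assume nn: "\<not> (fst (blk q) = fst (blk q') \<and> snd (blk q) \<noteq> snd (blk q'))"
    obtain \<sigma> where \<sigma>: "\<sigma> \<in> S" "\<sigma>!fst (blk q) = snd (blk q)" "\<sigma>!fst (blk q') = snd (blk q')"
      using sig[of "fst (blk q)" "fst (blk q')" "snd (blk q)" "snd (blk q')"] blk qq nn by blast
    have "addr \<sigma> \<in> D (fst (blk q)) (snd (blk q))" "addr \<sigma> \<in> D (fst (blk q')) (snd (blk q'))"
      using \<sigma> by (auto simp: D_def)
    then show False using Dfs[OF qq(1)] Dfs[OF qq(2)] fsdisj[OF qq] by blast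
  qed
  obtain c0 where c0: "c0 \<in> Vset as" "Omega bs j c0 > 0"
    "\<forall>k<M. \<forall>l<N. PiOm_ge as bs k l \<longrightarrow> Pi as k c0 = Omega bs l c0"
    using S2 j(1) by (auto simp: M_def N_def)
  then have c0C: "c0 \<in> C" by (simp add: C_def)
  have "c0 \<in> set bj" using c0(2) count_list_0_iff[of bj c0] by (auto simp: Omega_def bj_def)
  then obtain q0 where q0: "q0 < length bj" "bj!q0 = c0" by (auto simp: in_set_conv_nth)
  then have q0Q: "q0 \<in> Q" using c0C by (simp add: Q_def)
  define i0 where "i0 = fst (blk q0)"
  have allsame: "fst (blk q) = i0" if "q \<in> Q" for q
    using same[OF that q0Q] by (cases "q = q0") (auto simp: i0_def)
  have i0Md: "i0 \<in> Md" using blk q0Q by (simp add: i0_def)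
  then have i0M: "i0 < M" by (simp add: Md_def)
  define A where "A c = {q. q < length bj \<and> bj!q = c}" for c
  define B where "B c = {p. p < length (as!i0) \<and> as!i0!p = c}" for c
  have AQ: "A c \<subseteq> Q" if "c \<in> C" for c using that by (auto simp: A_def Q_def)
  have injA: "inj_on (snd \<circ> blk) (A c)" if "c \<in> C" for c
  proof (rule inj_onI)
    fix q q' assume "q \<in> A c" "q' \<in> A c" "(snd \<circ> blk) q = (snd \<circ> blk) q'"
    then show "q = q'" using same AQ[OF that] by fastforce
  qed
  have imA: "(snd \<circ> blk) ` A c \<subseteq> B c" if "c \<in> C" for c
  proof
    fix p assume "p \<in> (snd \<circ> blk) ` A c"
    then obtain q where q: "q \<in> A c" "p = snd (blk q)" by auto
    then have qQ: "q \<in> Q" using AQ[OF that] by auto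
    then have "p \<in> Pos i0" "as!i0!p = bj!q" using blk allsame q by auto
    then show "p \<in> B c" using q by (auto simp: Pos_def B_def A_def)
  qed
  have finB: "finite (B c)" for c by (simp add: B_def)
  have cardle: "card (A c) \<le> card (B c)" if "c \<in> C" for c
    using card_inj_on_le[OF injA[OF that] imA[OF that] finB] .
  have OmA: "Omega bs j c = card (A c)" for c by (simp add: Omega_def count_card A_def bj_def)
  have PiB: "Pi as i0 c = card (B c)" for c by (simp add: Pi_def count_card B_def)
  have good: "PiOm_ge as bs i0 j"
  proof (rule ccontr)
    assume "\<not> PiOm_ge as bs i0 j"
    then obtain c where c: "c \<in> Vset as" "Pi as i0 c < Omega bs j c"
      "\<forall>k<M. \<forall>l<N. PiOm_ge as bs k l \<longrightarrow> Pi as k c = Omega bs l c"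
      using S1 i0M j(1) \<open>\<not> PiOm_ge as bs i0 j\<close> unfolding M_def N_def by blast
    then have "c \<in> C" by (simp add: C_def)
    then show False using cardle[of c] c(2) OmA PiB by simp
  qed
  have surj: "\<exists>q\<in>Q. blk q = (i0, p)" if p: "p \<in> Pos i0" for p
  proof -
    define c where "c = as!i0!p"
    have cC: "c \<in> C" using p by (simp add: Pos_def c_def)
    have "Pi as i0 c = Omega bs j c" using cC i0M j(1) good by (simp add: C_def)
    then have "card ((snd \<circ> blk) ` A c) = card (B c)"
      using card_image[OF injA[OF cC]] OmA PiB by simp
    then have "(snd \<circ> blk) ` A c = B c" using card_subset_eq[OF finB imA[OF cC]] by simp
    moreover have "p \<in> B c" using p by (simp add: B_def Pos_def c_def)
    ultimately obtain q where "q \<in> A c" "snd (blk q) = p" by force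
    moreover then have "q \<in> Q" using AQ[OF cC] by auto
    ultimately show ?thesis using allsame by (metis prod.collapse)
  qed
  have gH: "g \<subseteq>\<^sub>m H" using g(4) by (simp add: decomp_def)
  have domg: "dom g \<subseteq> dom (hs!i0)"
  proof
    fix x assume xg: "x \<in> dom g"
    then have xH: "x \<in> dom H" using map_le_implies_dom_le[OF gH] by blast
    show "x \<in> dom (hs!i0)"
    proof (rule ccontr)
      assume "x \<notin> dom (hs!i0)"
      then obtain p where p: "p \<in> Pos i0" "x \<in> D i0 p" using cover[OF i0Md xH] by blast
      then obtain q where q: "q \<in> Q" "blk q = (i0, p)" using surj by blast
      then have "x \<in> dom (fs!q)" using Dfs[OF q(1)] p by auto
      moreover have "fs!q \<in> set fs" using q(1) g(1) by (simp add: Q_def bj_def)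
      moreover have "\<forall>f\<in>set fs. dom g \<inter> dom f = {}" using g(4) by (simp add: decomp_def)
      ultimately show False using xg by blast
    qed
  qed
  have gle: "g \<subseteq>\<^sub>m hs!i0"
    unfolding map_le_def
  proof (intro ballI)
    fix x assume "x \<in> dom g"
    then have "x \<in> dom (hs!i0)" using domg by blast
    then show "g x = (hs!i0) x" using gH hi(2)[OF i0M] \<open>x \<in> dom g\<close> by (auto simp: map_le_def)
  qed
  have "hs!i0 \<in> sem1 I \<eta> (psis!j)"
    using sem1_up[OF avpsi[rule_format, OF j(1)] rhoI g(2) gle hi(5)[OF i0M]] .
  then show "\<exists>i<length phis. \<exists>j<length psis. hs ! i \<in> sem1 I \<eta> (psis ! j) \<and> PiOm_ge as bs i j"
    using i0M j(1) good by (auto simp: M_def N_def)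
qed

end
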